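(* For all $\widehat\psi_1,\widehat\psi_2\in\mathcal{M}_0$ with $\widehat\psi_1\le\widehat\psi_2$ entrywise, one has $\widehat\Phi(\widehat\psi_1)\ge\widehat\Phi(\widehat\psi_2)$ entrywise.
   Context: Discrete setting: $\Omega=(0,1)$, $T>0$, $\sigma>0$; $u_T:[0,1]\to\mathbb{R}$ bounded. $f:[0,1]\times\mathbb{R}\to\mathbb{R}$ is continuous and nonincreasing in its second variable, bounded, and $f\le0$. For positive integers $I,J$: $\Delta t=T/I$, $\Delta x=1/J$, $x_j=j\Delta x$. $\mathcal{M}$ is the set of real matrices $(m_{i,j})_{0\le i\le I,0\le j\le J}$, $\mathcal{M}_\epsilon=\{m\in\mathcal{M}: m_{i,j}\ge\epsilon\ \forall i,j\}$. For $\widehat\psi\in\mathcal{M}_0$, $\widehat\Phi(\widehat\psi)$ is the unique $\widehat\phi\in\mathcal{M}$ with $\widehat\phi_{I,j}=\exp(u_T(x_j)/\sigma^2)$ and, for $0\le i\le I-1$, $0\le j\le J$, $\frac{\widehat\phi_{i+1,j}-\widehat\phi_{i,j}}{\Delta t}+\frac{\sigma^2}{2}\frac{\widehat\phi_{i,j+1}-2\widehat\phi_{i,j}+\widehat\phi_{i,j-1}}{(\Delta x)^2}=-\frac{1}{\sigma^2}f(x_j,\widehat\phi_{i,j}\widehat\psi_{i,j})\widehat\phi_{i,j}$, with conventions $\widehat\phi_{i,-1}=\widehat\phi_{i,0}$, $\widehat\phi_{i,J+1}=\widehat\phi_{i,J}$ (existence and uniqueness being known, and $\widehat\phi\ge0$).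 *)

theory Defs
  imports "HOL-Analysis.Analysis"
begin

text \<open>Matrices (m_{i,j}), 0 \<le> i \<le> I, 0 \<le> j \<le> J, are represented as functions
  nat \<Rightarrow> nat \<Rightarrow> real; only entries with i \<le> I and j \<le> J are meaningful.\<close>

definition in_M_eps :: "nat \<Rightarrow> nat \<Rightarrow> real \<Rightarrow> (nat \<Rightarrow> nat \<Rightarrow> real) \<Rightarrow> bool" where
  "in_M_eps I J eps m \<longleftrightarrow> (\<forall>i\<le>I. \<forall>j\<le>J. m i j \<ge> eps)"

text \<open>Neighbours with the Neumann conventions phi_{i,-1} = phi_{i,0}, phi_{i,J+1} = phi_{i,J}.\<close>
definition left_nb :: "(nat \<Rightarrow> nat \<Rightarrow> real) \<Rightarrow> nat \<Rightarrow> nat \<Rightarrow> real" where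
  "left_nb phi i j = (if j = 0 then phi i 0 else phi i (j - 1))"

definition right_nb :: "nat \<Rightarrow> (nat \<Rightarrow> nat \<Rightarrow> real) \<Rightarrow> nat \<Rightarrow> nat \<Rightarrow> real" where
  "right_nb J phi i j = (if j = J then phi i J else phi i (j + 1))"

definition phi_scheme ::
  "real \<Rightarrow> real \<Rightarrow> nat \<Rightarrow> nat \<Rightarrow> (real \<Rightarrow> real) \<Rightarrow> (real \<Rightarrow> real \<Rightarrow> real)
   \<Rightarrow> (nat \<Rightarrow> nat \<Rightarrow> real) \<Rightarrow> (nat \<Rightarrow> nat \<Rightarrow> real) \<Rightarrow> bool" where
  "phi_scheme T \<sigma> I J uT f psi phi \<longleftrightarrow>
     (let dt = T / real I; dx = 1 / real J; x = (\<lambda>j::nat. real j * dx) in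
       (\<forall>j\<le>J. phi I j = exp (uT (x j) / \<sigma>\<^sup>2)) \<and>
       (\<forall>i<I. \<forall>j\<le>J.
          (phi (i+1) j - phi i j) / dt
          + \<sigma>\<^sup>2 / 2 * ((right_nb J phi i j - 2 * phi i j + left_nb phi i j) / dx\<^sup>2)
          = - (1 / \<sigma>\<^sup>2) * f (x j) (phi i j * psi i j) * phi i j))"

text \<open>hat Phi(hat psi): the unique solution of the scheme (entries outside the index
  range are fixed to 0 so that the solution is unique as a function).\<close>
definition Phi_hat ::
  "real \<Rightarrow> real \<Rightarrow> nat \<Rightarrow> nat \<Rightarrow> (real \<Rightarrow> real) \<Rightarrow> (real \<Rightarrow> real \<Rightarrow> real)
   \<Rightarrow> (nat \<Rightarrow> nat \<Rightarrow> real) \<Rightarrow> (nat \<Rightarrow> nat \<Rightarrow> real)" where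
  "Phi_hat T \<sigma> I J uT f psi =
     (THE phi. phi_scheme T \<sigma> I J uT f psi phi \<and> (\<forall>i j. (I < i \<or> J < j) \<longrightarrow> phi i j = 0))"

end

theory Submission
  imports Defs
begin

definition rnb :: "nat \<Rightarrow> (nat \<Rightarrow> real) \<Rightarrow> nat \<Rightarrow> real" where
  "rnb J q j = (if j = J then q J else q (j+1))"
definition lnb :: "(nat \<Rightarrow> real) \<Rightarrow> nat \<Rightarrow> real" where
  "lnb q j = (if j = 0 then q 0 else q (j-1))"

definition roweq :: "real \<Rightarrow> real \<Rightarrow> real \<Rightarrow> nat \<Rightarrow> (real \<Rightarrow> real \<Rightarrow> real)
   \<Rightarrow> (nat \<Rightarrow> real) \<Rightarrow> (nat \<Rightarrow> real) \<Rightarrow> (nat \<Rightarrow> real) \<Rightarrow> nat \<Rightarrow> bool" where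
  "roweq h c \<sigma> J f ps r q j \<longleftrightarrow>
     (r j - q j) * h + c * (rnb J q j - 2 * q j + lnb q j)
       = - (1 / \<sigma>\<^sup>2) * f (real j * (1 / real J)) (q j * ps j) * q j"

lemma scheme_iff:
  assumes "T > 0" "I > 0" "J > 0"
  shows "phi_scheme T \<sigma> I J uT f psi phi \<longleftrightarrow>
     (\<forall>j\<le>J. phi I j = exp (uT (real j * (1 / real J)) / \<sigma>\<^sup>2)) \<and>
     (\<forall>i<I. \<forall>j\<le>J. roweq (real I / T) (\<sigma>\<^sup>2 / 2 * (real J)\<^sup>2) \<sigma> J f (psi i) (phi (i+1)) (phi i) j)"
proof -
  have *: "(a / (T / real I) + \<sigma>\<^sup>2 / 2 * (b / (1 / real J)\<^sup>2)) =
           (a * (real I / T) + \<sigma>\<^sup>2 / 2 * (real J)\<^sup>2 * b)" for a b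
    using assms by (simp add: field_simps)
  have r: "right_nb J phi i j = rnb J (phi i) j" "left_nb phi i j = lnb (phi i) j" for i j
    by (simp_all add: right_nb_def rnb_def left_nb_def lnb_def)
  show ?thesis
    unfolding phi_scheme_def Let_def roweq_def r *
    by (simp add: algebra_simps)
qed

lemma maxp:
  fixes w :: "nat \<Rightarrow> real"
  assumes h: "h > 0" and c: "c \<ge> 0"
    and H: "\<And>j. j \<le> J \<Longrightarrow> w j > 0 \<Longrightarrow> h * w j - c * (rnb J w j - 2 * w j + lnb w j) \<le> 0"
  shows "\<forall>j\<le>J. w j \<le> 0"
proof -
  have "Max (w ` {..J}) \<in> w ` {..J}" by (intro Max_in) auto
  then obtain m where m: "m \<le> J" "w m = Max (w ` {..J})" by (metis atMost_iff imageE)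
  have mx: "w j \<le> w m" if "j \<le> J" for j using m that by auto
  have "w m \<le> 0"
  proof (rule ccontr)
    assume "\<not> w m \<le> 0" hence pos: "w m > 0" by simp
    have "rnb J w m \<le> w m" using mx m unfolding rnb_def by auto
    moreover have "lnb w m \<le> w m" using mx m unfolding lnb_def by auto
    ultimately have "c * (rnb J w m - 2 * w m + lnb w m) \<le> 0"
      using c by (intro mult_nonneg_nonpos) auto
    moreover have "h * w m > 0" using h pos by simp
    ultimately show False using H[OF m(1) pos] by linarith
  qed
  thus ?thesis using mx by force
qed

lemma nb_diff:
  "rnb J (\<lambda>j. a j - b j) j = rnb J a j - rnb J b j"
  "lnb (\<lambda>j. a j - b j) j = lnb a j - lnb b j"
  "rnb J (\<lambda>j. - a j) j = - rnb J a j"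
  "lnb (\<lambda>j. - a j) j = - lnb a j"
  by (simp_all add: rnb_def lnb_def)

lemma row_cmp:
  assumes h: "h > 0" and c: "c \<ge> 0" and s: "\<sigma> > 0" and J: "J > 0"
    and f_mono: "\<And>x y z. x \<in> {0..1} \<Longrightarrow> y \<le> z \<Longrightarrow> f x z \<le> f x y"
    and f_nonpos: "\<And>x y. x \<in> {0..1} \<Longrightarrow> f x y \<le> 0"
    and e1: "\<And>j. j \<le> J \<Longrightarrow> roweq h c \<sigma> J f ps1 r1 q1 j"
    and e2: "\<And>j. j \<le> J \<Longrightarrow> roweq h c \<sigma> J f ps2 r2 q2 j"
    and rr: "\<And>j. j \<le> J \<Longrightarrow> r2 j \<le> r1 j"
    and pp: "\<And>j. j \<le> J \<Longrightarrow> 0 \<le> ps1 j \<and> ps1 j \<le> ps2 j"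
    and q1: "\<And>j. j \<le> J \<Longrightarrow> 0 \<le> q1 j"
  shows "\<forall>j\<le>J. q2 j \<le> q1 j"
proof -
  have "\<forall>j\<le>J. (\<lambda>j. q2 j - q1 j) j \<le> 0"
  proof (rule maxp[OF h c])
    fix j assume j: "j \<le> J" and w: "(\<lambda>j. q2 j - q1 j) j > 0"
    define x where "x = real j * (1 / real J)"
    have x: "x \<in> {0..1}" using j J by (auto simp: x_def field_simps)
    define A where "A = f x (q2 j * ps2 j)"
    define B where "B = f x (q1 j * ps1 j)"
    have qq: "q1 j \<le> q2 j" "0 \<le> q1 j" "0 \<le> q2 j" using w q1[OF j] by auto
    have "q1 j * ps1 j \<le> q2 j * ps2 j" using qq pp[OF j] by (intro mult_mono) auto
    hence AB: "A \<le> B" unfolding A_def B_def using f_mono x by blast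
    have B0: "B \<le> 0" unfolding B_def using f_nonpos x by blast
    have "A * q2 j \<le> B * q2 j" using AB qq by (intro mult_right_mono) auto
    also have "\<dots> \<le> B * q1 j" using B0 qq by (intro mult_left_mono_neg) auto
    finally have ABq: "A * q2 j \<le> B * q1 j" .
    have E1: "(r1 j - q1 j) * h + c * (rnb J q1 j - 2 * q1 j + lnb q1 j) = - (1 / \<sigma>\<^sup>2) * B * q1 j"
      using e1[OF j] unfolding roweq_def B_def x_def .
    have E2: "(r2 j - q2 j) * h + c * (rnb J q2 j - 2 * q2 j + lnb q2 j) = - (1 / \<sigma>\<^sup>2) * A * q2 j"
      using e2[OF j] unfolding roweq_def A_def x_def .
    have "h * (q2 j - q1 j) - c * (rnb J (\<lambda>j. q2 j - q1 j) j - 2 * (q2 j - q1 j) + lnb (\<lambda>j. q2 j - q1 j) j)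
        = h * (r2 j - r1 j) + (1 / \<sigma>\<^sup>2) * (A * q2 j - B * q1 j)"
      using E1 E2 unfolding nb_diff by (simp add: algebra_simps)
    also have "\<dots> \<le> 0"
    proof -
      have "h * (r2 j - r1 j) \<le> 0" using h rr[OF j] by (simp add: mult_nonneg_nonpos)
      moreover have "(1 / \<sigma>\<^sup>2) * (A * q2 j - B * q1 j) \<le> 0" using ABq s
        by (intro mult_nonneg_nonpos) auto
      ultimately show ?thesis by linarith
    qed
    finally show "h * (\<lambda>j. q2 j - q1 j) j - c * (rnb J (\<lambda>j. q2 j - q1 j) j - 2 * (\<lambda>j. q2 j - q1 j) j + lnb (\<lambda>j. q2 j - q1 j) j) \<le> 0"
      by simp
  qed
  thus ?thesis by simp
qed

lemma row_nonneg:
  assumes h: "h > 0" and c: "c \<ge> 0" and s: "\<sigma> > 0" and J: "J > 0"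
    and f_nonpos: "\<And>x y. x \<in> {0..1} \<Longrightarrow> f x y \<le> 0"
    and e: "\<And>j. j \<le> J \<Longrightarrow> roweq h c \<sigma> J f ps r q j"
    and r: "\<And>j. j \<le> J \<Longrightarrow> 0 \<le> r j"
  shows "\<forall>j\<le>J. 0 \<le> q j"
proof -
  have "\<forall>j\<le>J. (\<lambda>j. - q j) j \<le> 0"
  proof (rule maxp[OF h c])
    fix j assume j: "j \<le> J" and w: "(\<lambda>j. - q j) j > 0"
    define x where "x = real j * (1 / real J)"
    have x: "x \<in> {0..1}" using j J by (auto simp: x_def field_simps)
    define B where "B = f x (q j * ps j)"
    have B0: "B \<le> 0" unfolding B_def using f_nonpos x by blast
    have Bq: "0 \<le> B * q j" using B0 w by (simp add: mult_nonpos_nonpos)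
    have E: "(r j - q j) * h + c * (rnb J q j - 2 * q j + lnb q j) = - (1 / \<sigma>\<^sup>2) * B * q j"
      using e[OF j] unfolding roweq_def B_def x_def .
    have "h * (- q j) - c * (rnb J (\<lambda>j. - q j) j - 2 * (- q j) + lnb (\<lambda>j. - q j) j)
        = - h * r j - (1 / \<sigma>\<^sup>2) * (B * q j)"
      using E unfolding nb_diff by (simp add: algebra_simps)
    also have "\<dots> \<le> 0"
    proof -
      have "0 \<le> h * r j" using h r[OF j] by simp
      moreover have "0 \<le> (1 / \<sigma>\<^sup>2) * (B * q j)" using Bq s by simp
      ultimately show ?thesis by linarith
    qed
    finally show "h * (\<lambda>j. - q j) j - c * (rnb J (\<lambda>j. - q j) j - 2 * (\<lambda>j. - q j) j + lnb (\<lambda>j. - q j) j) \<le> 0"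
      by simp
  qed
  thus ?thesis by simp
qed

primrec shoot :: "(nat \<Rightarrow> real \<Rightarrow> real) \<Rightarrow> real \<Rightarrow> real \<Rightarrow> nat \<Rightarrow> real \<times> real" where
  "shoot G c s 0 = (s, 0)"
| "shoot G c s (Suc j) = (fst (shoot G c s j) + (snd (shoot G c s j) + G j (fst (shoot G c s j)) / c),
                          snd (shoot G c s j) + G j (fst (shoot G c s j)) / c)"

lemma shoot_cont:
  assumes "\<And>j. j \<le> J \<Longrightarrow> continuous_on UNIV (G j)"
  shows "j \<le> Suc J \<Longrightarrow> continuous_on UNIV (\<lambda>s. fst (shoot G c s j)) \<and> continuous_on UNIV (\<lambda>s. snd (shoot G c s j))"
proof (induction j)
  case 0 then show ?case by (simp add: continuous_on_const continuous_on_id)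
next
  case (Suc j)
  then have IH: "continuous_on UNIV (\<lambda>s. fst (shoot G c s j))" "continuous_on UNIV (\<lambda>s. snd (shoot G c s j))"
    by auto
  have g: "continuous_on UNIV (\<lambda>s. G j (fst (shoot G c s j)))"
    using continuous_on_compose2[OF assms IH(1)] Suc.prems by auto
  show ?case using IH g by (auto simp: divide_inverse intro!: continuous_intros)
qed

lemma shoot_upper:
  assumes c: "c > 0" and M: "M \<ge> 0" and G: "\<And>j t. j \<le> J \<Longrightarrow> t \<ge> M \<Longrightarrow> G j t \<ge> 0"
  shows "j \<le> Suc J \<Longrightarrow> fst (shoot G c M j) \<ge> M \<and> snd (shoot G c M j) \<ge> 0"
proof (induction j)
  case 0 then show ?case by simp
next
  case (Suc j)
  then have IH: "fst (shoot G c M j) \<ge> M" "snd (shoot G c M j) \<ge> 0" by auto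
  have "G j (fst (shoot G c M j)) / c \<ge> 0" using G[OF _ IH(1)] Suc.prems c by simp
  then show ?case using IH by simp
qed

lemma shoot_lower:
  assumes c: "c > 0" and M: "M \<ge> 0" and G: "\<And>j t. j \<le> J \<Longrightarrow> t \<le> -M \<Longrightarrow> G j t \<le> 0"
  shows "j \<le> Suc J \<Longrightarrow> fst (shoot G c (-M) j) \<le> -M \<and> snd (shoot G c (-M) j) \<le> 0"
proof (induction j)
  case 0 then show ?case by simp
next
  case (Suc j)
  then have IH: "fst (shoot G c (-M) j) \<le> -M" "snd (shoot G c (-M) j) \<le> 0" by auto
  have "G j (fst (shoot G c (-M) j)) / c \<le> 0" using G[OF _ IH(1)] Suc.prems c
    by (simp add: divide_nonpos_pos)
  then show ?case using IH by simp
qed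

lemma shoot_sol:
  assumes c: "c > 0" and fin: "snd (shoot G c s (Suc J)) = 0" and j: "j \<le> J"
  shows "c * (rnb J (\<lambda>j. fst (shoot G c s j)) j - 2 * fst (shoot G c s j) + lnb (\<lambda>j. fst (shoot G c s j)) j)
         = G j (fst (shoot G c s j))"
proof -
  have d: "fst (shoot G c s (Suc k)) - fst (shoot G c s k) = snd (shoot G c s (Suc k))" for k by simp
  have R: "rnb J (\<lambda>j. fst (shoot G c s j)) j - fst (shoot G c s j) = snd (shoot G c s (Suc j))"
    using fin d[of j] by (auto simp: rnb_def)
  have L: "fst (shoot G c s j) - lnb (\<lambda>j. fst (shoot G c s j)) j = snd (shoot G c s j)"
  proof (cases j)
    case 0 then show ?thesis by (simp add: lnb_def)
  next
    case (Suc k) then show ?thesis using d[of k] by (simp add: lnb_def)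
  qed
  have "rnb J (\<lambda>j. fst (shoot G c s j)) j - 2 * fst (shoot G c s j) + lnb (\<lambda>j. fst (shoot G c s j)) j
      = snd (shoot G c s (Suc j)) - snd (shoot G c s j)" using R L by linarith
  also have "\<dots> = G j (fst (shoot G c s j)) / c" by simp
  finally show ?thesis using c by simp
qed

lemma row_exists:
  assumes h: "h > 0" and c: "c > 0" and s: "\<sigma> > 0" and J: "J > 0"
    and f_cont: "continuous_on ({0..1} \<times> UNIV) (\<lambda>(x, y). f x y)"
    and f_nonpos: "\<And>x y. x \<in> {0..1} \<Longrightarrow> f x y \<le> 0"
  shows "\<exists>q. \<forall>j\<le>J. roweq h c \<sigma> J f ps r q j"
proof -
  define x where "x = (\<lambda>j::nat. real j * (1 / real J))"
  have x: "j \<le> J \<Longrightarrow> x j \<in> {0..1}" for j using J by (auto simp: x_def field_simps)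
  define G where "G = (\<lambda>j t. (t - r j) * h - (1 / \<sigma>\<^sup>2) * f (x j) (t * ps j) * t)"
  have Gc: "continuous_on UNIV (G j)" if j: "j \<le> J" for j
  proof -
    have "continuous_on UNIV (\<lambda>t. (\<lambda>(x, y). f x y) (x j, t * ps j))"
      by (rule continuous_on_compose2[OF f_cont]) (use x[OF j] in \<open>auto intro!: continuous_intros\<close>)
    hence "continuous_on UNIV (\<lambda>t. f (x j) (t * ps j))" by simp
    thus ?thesis unfolding G_def by (auto simp: divide_inverse intro!: continuous_intros)
  qed
  define M where "M = Max ((\<lambda>j. \<bar>r j\<bar>) ` {..J})"
  have rM: "\<bar>r j\<bar> \<le> M" if "j \<le> J" for j unfolding M_def using that by (intro Max_ge) auto
  have M0: "M \<ge> 0" using rM[of 0] by simp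
  have Gup: "G j t \<ge> 0" if "j \<le> J" "t \<ge> M" for j t
  proof -
    have "(t - r j) * h \<ge> 0" using rM[OF that(1)] that(2) h by simp
    moreover have "f (x j) (t * ps j) * t \<le> 0" using f_nonpos[OF x[OF that(1)]] that(2) M0
      by (intro mult_nonpos_nonneg) auto
    moreover have "(1 / \<sigma>\<^sup>2) * (f (x j) (t * ps j) * t) \<le> 0"
      using calculation(2) by (rule mult_nonneg_nonpos[rotated]) simp_all
    moreover have "G j t = (t - r j) * h - (1 / \<sigma>\<^sup>2) * (f (x j) (t * ps j) * t)"
      by (simp add: G_def mult.assoc)
    ultimately show ?thesis by linarith
  qed
  have Glo: "G j t \<le> 0" if "j \<le> J" "t \<le> -M" for j t
  proof -
    have "(t - r j) * h \<le> 0" using rM[OF that(1)] that(2) h by (simp add: mult_nonpos_nonneg)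
    moreover have "f (x j) (t * ps j) * t \<ge> 0" using f_nonpos[OF x[OF that(1)]] that(2) M0
      by (intro mult_nonpos_nonpos) auto
    moreover have "(1 / \<sigma>\<^sup>2) * (f (x j) (t * ps j) * t) \<ge> 0"
      using calculation(2) by (rule mult_nonneg_nonneg[rotated]) simp_all
    moreover have "G j t = (t - r j) * h - (1 / \<sigma>\<^sup>2) * (f (x j) (t * ps j) * t)"
      by (simp add: G_def mult.assoc)
    ultimately show ?thesis by linarith
  qed
  have "fst (shoot G c M (Suc J)) \<ge> M \<and> snd (shoot G c M (Suc J)) \<ge> 0"
    by (rule shoot_upper[where J=J, OF c M0]) (auto intro: Gup)
  hence F1: "snd (shoot G c M (Suc J)) \<ge> 0" by simp
  have "fst (shoot G c (-M) (Suc J)) \<le> -M \<and> snd (shoot G c (-M) (Suc J)) \<le> 0"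
    by (rule shoot_lower[where J=J, OF c M0]) (auto intro: Glo)
  hence F0: "snd (shoot G c (-M) (Suc J)) \<le> 0" by simp
  have cont: "continuous_on {-M..M} (\<lambda>s. snd (shoot G c s (Suc J)))"
    using shoot_cont[where J=J and G=G and c=c and j="Suc J", OF Gc] continuous_on_subset by blast
  obtain s0 where s0: "snd (shoot G c s0 (Suc J)) = 0"
    using IVT'[of "\<lambda>s. snd (shoot G c s (Suc J))" "-M" 0 M, OF F0 F1 _ cont] M0 by auto
  define q where "q = (\<lambda>j. fst (shoot G c s0 j))"
  have "roweq h c \<sigma> J f ps r q j" if j: "j \<le> J" for j
  proof -
    have "c * (rnb J q j - 2 * q j + lnb q j) = G j (q j)"
      unfolding q_def using shoot_sol[OF c s0 j] .
    thus ?thesis unfolding roweq_def G_def x_def by (simp add: algebra_simps)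
  qed
  thus ?thesis by blast
qed

lemma roweq_cong:
  assumes "j \<le> J" "\<And>k. k \<le> J \<Longrightarrow> q k = q' k" "r j = r' j"
  shows "roweq h c \<sigma> J f ps r q j = roweq h c \<sigma> J f ps r' q' j"
proof -
  have "rnb J q j = rnb J q' j" "lnb q j = lnb q' j" using assms by (auto simp: rnb_def lnb_def)
  thus ?thesis using assms by (simp add: roweq_def)
qed

definition Psol where
  "Psol T \<sigma> I J uT f psi phi \<longleftrightarrow> phi_scheme T \<sigma> I J uT f psi phi \<and> (\<forall>i j. (I < i \<or> J < j) \<longrightarrow> phi i j = 0)"

lemma Psol_ex1:
  fixes T \<sigma> :: real and I J :: nat and uT :: "real \<Rightarrow> real" and f :: "real \<Rightarrow> real \<Rightarrow> real"
    and psi :: "nat \<Rightarrow> nat \<Rightarrow> real"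
  assumes T_pos: "T > 0" and sigma_pos: "\<sigma> > 0"
    and I_pos: "I > 0" and J_pos: "J > 0"
    and f_cont: "continuous_on ({0..1} \<times> UNIV) (\<lambda>(x, y). f x y)"
    and f_mono: "\<And>x y z. x \<in> {0..1} \<Longrightarrow> y \<le> z \<Longrightarrow> f x z \<le> f x y"
    and f_nonpos: "\<And>x y. x \<in> {0..1} \<Longrightarrow> f x y \<le> 0"
    and psi_M0: "in_M_eps I J 0 psi"
  shows "\<exists>!phi. Psol T \<sigma> I J uT f psi phi"
proof -
  define h where "h = real I / T"
  define c where "c = \<sigma>\<^sup>2 / 2 * (real J)\<^sup>2"
  have h: "h > 0" using T_pos I_pos by (simp add: h_def)
  have c: "c > 0" using sigma_pos J_pos by (simp add: c_def)
  have psi0: "\<And>i j. i \<le> I \<Longrightarrow> j \<le> J \<Longrightarrow> 0 \<le> psi i j" using psi_M0 by (simp add: in_M_eps_def)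
  define tm where "tm = (\<lambda>j::nat. exp (uT (real j * (1 / real J)) / \<sigma>\<^sup>2))"
  have SI: "phi_scheme T \<sigma> I J uT f psi phi \<longleftrightarrow>
     (\<forall>j\<le>J. phi I j = tm j) \<and> (\<forall>i<I. \<forall>j\<le>J. roweq h c \<sigma> J f (psi i) (phi (i+1)) (phi i) j)" for phi
    using scheme_iff[OF T_pos I_pos J_pos] unfolding h_def c_def tm_def by blast
  have "\<forall>p. \<exists>q. \<forall>j\<le>J. roweq h c \<sigma> J f (psi (fst p)) (snd p) q j"
    using row_exists[OF h c sigma_pos J_pos f_cont f_nonpos] by blast
  from choice[OF this] obtain S0 where S0: "\<And>p j. j \<le> J \<Longrightarrow> roweq h c \<sigma> J f (psi (fst p)) (snd p) (S0 p) j"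
    by blast
  define rows where "rows = rec_nat tm (\<lambda>k prev. S0 (I - Suc k, prev))"
  have rows0: "rows 0 = tm" and rowsS: "rows (Suc k) = S0 (I - Suc k, rows k)" for k
    by (simp_all add: rows_def)
  define phi where "phi = (\<lambda>i j. if i \<le> I \<and> j \<le> J then rows (I - i) j else 0)"
  have "phi_scheme T \<sigma> I J uT f psi phi"
    unfolding SI
  proof (intro conjI allI impI)
    fix j assume "j \<le> J" thus "phi I j = tm j" by (simp add: phi_def rows0)
  next
    fix i j assume i: "i < I" and j: "j \<le> J"
    have eq: "rows (I - i) = S0 (i, rows (I - Suc i))"
      using rowsS[of "I - Suc i"] i by (simp add: Suc_diff_Suc)
    have "roweq h c \<sigma> J f (psi i) (rows (I - Suc i)) (rows (I - i)) j"
      using S0[OF j, of "(i, rows (I - Suc i))"] eq by simp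
    thus "roweq h c \<sigma> J f (psi i) (phi (i + 1)) (phi i) j"
      by (subst roweq_cong[OF j]) (use i j in \<open>auto simp: phi_def\<close>)
  qed
  moreover have "\<forall>i j. (I < i \<or> J < j) \<longrightarrow> phi i j = 0" by (auto simp: phi_def)
  ultimately have ex: "Psol T \<sigma> I J uT f psi phi" by (simp add: Psol_def)
  have uniq: "p1 = p2" if P1: "Psol T \<sigma> I J uT f psi p1" and P2: "Psol T \<sigma> I J uT f psi p2" for p1 p2
  proof -
    have s1: "\<forall>j\<le>J. p1 I j = tm j" "\<forall>i<I. \<forall>j\<le>J. roweq h c \<sigma> J f (psi i) (p1 (i+1)) (p1 i) j"
      using P1 unfolding Psol_def SI by auto
    have s2: "\<forall>j\<le>J. p2 I j = tm j" "\<forall>i<I. \<forall>j\<le>J. roweq h c \<sigma> J f (psi i) (p2 (i+1)) (p2 i) j"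
      using P2 unfolding Psol_def SI by auto
    have "k \<le> I \<Longrightarrow> \<forall>j\<le>J. p1 (I - k) j = p2 (I - k) j \<and> 0 \<le> p1 (I - k) j" for k
    proof (induction k)
      case 0 then show ?case using s1(1) s2(1) by (simp add: tm_def)
    next
      case (Suc k)
      define i where "i = I - Suc k"
      have i: "i < I" "i + 1 = I - k" using Suc.prems by (auto simp: i_def)
      have IH: "\<forall>j\<le>J. p1 (i+1) j = p2 (i+1) j \<and> 0 \<le> p1 (i+1) j" using Suc i by auto
      have e1: "\<And>j. j \<le> J \<Longrightarrow> roweq h c \<sigma> J f (psi i) (p1 (i+1)) (p1 i) j" using s1(2) i by auto
      have e2: "\<And>j. j \<le> J \<Longrightarrow> roweq h c \<sigma> J f (psi i) (p1 (i+1)) (p2 i) j"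
        using s2(2) i IH by (subst roweq_cong) auto
      have n1: "\<forall>j\<le>J. 0 \<le> p1 i j"
        by (rule row_nonneg[OF h less_imp_le[OF c] sigma_pos J_pos f_nonpos e1]) (use IH in auto)
      have n2: "\<forall>j\<le>J. 0 \<le> p2 i j"
        by (rule row_nonneg[OF h less_imp_le[OF c] sigma_pos J_pos f_nonpos e2]) (use IH in auto)
      have "\<forall>j\<le>J. p2 i j \<le> p1 i j"
        by (rule row_cmp[OF h less_imp_le[OF c] sigma_pos J_pos f_mono f_nonpos e1 e2])
           (use n1 psi0 i in auto)
      moreover have "\<forall>j\<le>J. p1 i j \<le> p2 i j"
        by (rule row_cmp[OF h less_imp_le[OF c] sigma_pos J_pos f_mono f_nonpos e2 e1])
           (use n2 psi0 i in auto)
      ultimately show ?case using n1 by (auto simp: i_def[symmetric] intro: antisym)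
    qed
    hence inside: "p1 i j = p2 i j" if "i \<le> I" "j \<le> J" for i j
      using that by (metis diff_diff_cancel diff_le_self)
    show ?thesis
    proof (intro ext)
      fix i j show "p1 i j = p2 i j"
        using inside P1 P2 unfolding Psol_def by (metis not_le)
    qed
  qed
  show ?thesis using ex uniq by blast
qed

theorem proposition8:
  fixes T \<sigma> :: real and I J :: nat and uT :: "real \<Rightarrow> real" and f :: "real \<Rightarrow> real \<Rightarrow> real"
    and psi1 psi2 :: "nat \<Rightarrow> nat \<Rightarrow> real"
  assumes T_pos: "T > 0" and sigma_pos: "\<sigma> > 0"
    and I_pos: "I > 0" and J_pos: "J > 0"
    and uT_bdd: "bounded (uT ` {0..1})"
    and f_cont: "continuous_on ({0..1} \<times> UNIV) (\<lambda>(x, y). f x y)"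
    and f_mono: "\<And>x y z. x \<in> {0..1} \<Longrightarrow> y \<le> z \<Longrightarrow> f x z \<le> f x y"
    and f_bdd: "bounded ((\<lambda>(x, y). f x y) ` ({0..1} \<times> UNIV))"
    and f_nonpos: "\<And>x y. x \<in> {0..1} \<Longrightarrow> f x y \<le> 0"
    and psi1_M0: "in_M_eps I J 0 psi1" and psi2_M0: "in_M_eps I J 0 psi2"
    and le: "\<And>i j. i \<le> I \<Longrightarrow> j \<le> J \<Longrightarrow> psi1 i j \<le> psi2 i j"
  shows "\<forall>i\<le>I. \<forall>j\<le>J. Phi_hat T \<sigma> I J uT f psi1 i j \<ge> Phi_hat T \<sigma> I J uT f psi2 i j"
proof -
  define a where "a = Phi_hat T \<sigma> I J uT f psi1"
  define b where "b = Phi_hat T \<sigma> I J uT f psi2"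
  have Pa: "Psol T \<sigma> I J uT f psi1 a"
    unfolding a_def Phi_hat_def Psol_def[symmetric]
    by (rule theI'[OF Psol_ex1[OF T_pos sigma_pos I_pos J_pos f_cont f_mono f_nonpos psi1_M0]])
  have Pb: "Psol T \<sigma> I J uT f psi2 b"
    unfolding b_def Phi_hat_def Psol_def[symmetric]
    by (rule theI'[OF Psol_ex1[OF T_pos sigma_pos I_pos J_pos f_cont f_mono f_nonpos psi2_M0]])
  define h where "h = real I / T"
  define c where "c = \<sigma>\<^sup>2 / 2 * (real J)\<^sup>2"
  have h: "h > 0" using T_pos I_pos by (simp add: h_def)
  have c: "c \<ge> 0" using sigma_pos J_pos by (simp add: c_def)
  have p1: "\<And>i j. i \<le> I \<Longrightarrow> j \<le> J \<Longrightarrow> 0 \<le> psi1 i j" using psi1_M0 by (simp add: in_M_eps_def)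
  define tm where "tm = (\<lambda>j::nat. exp (uT (real j * (1 / real J)) / \<sigma>\<^sup>2))"
  have SI: "phi_scheme T \<sigma> I J uT f psi phi \<longleftrightarrow>
     (\<forall>j\<le>J. phi I j = tm j) \<and> (\<forall>i<I. \<forall>j\<le>J. roweq h c \<sigma> J f (psi i) (phi (i+1)) (phi i) j)" for phi psi
    using scheme_iff[OF T_pos I_pos J_pos] unfolding h_def c_def tm_def by blast
  have s1: "\<forall>j\<le>J. a I j = tm j" "\<forall>i<I. \<forall>j\<le>J. roweq h c \<sigma> J f (psi1 i) (a (i+1)) (a i) j"
    using Pa unfolding Psol_def SI by auto
  have s2: "\<forall>j\<le>J. b I j = tm j" "\<forall>i<I. \<forall>j\<le>J. roweq h c \<sigma> J f (psi2 i) (b (i+1)) (b i) j"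
    using Pb unfolding Psol_def SI by auto
  have "k \<le> I \<Longrightarrow> \<forall>j\<le>J. b (I - k) j \<le> a (I - k) j \<and> 0 \<le> a (I - k) j" for k
  proof (induction k)
    case 0 then show ?case using s1(1) s2(1) by (simp add: tm_def)
  next
    case (Suc k)
    define i where "i = I - Suc k"
    have i: "i < I" "i + 1 = I - k" using Suc.prems by (auto simp: i_def)
    have IH: "\<forall>j\<le>J. b (i+1) j \<le> a (i+1) j \<and> 0 \<le> a (i+1) j" using Suc i by auto
    have e1: "\<And>j. j \<le> J \<Longrightarrow> roweq h c \<sigma> J f (psi1 i) (a (i+1)) (a i) j" using s1(2) i by auto
    have e2: "\<And>j. j \<le> J \<Longrightarrow> roweq h c \<sigma> J f (psi2 i) (b (i+1)) (b i) j" using s2(2) i by auto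
    have n1: "\<forall>j\<le>J. 0 \<le> a i j"
      by (rule row_nonneg[OF h c sigma_pos J_pos f_nonpos e1]) (use IH in auto)
    have "\<forall>j\<le>J. b i j \<le> a i j"
      by (rule row_cmp[OF h c sigma_pos J_pos f_mono f_nonpos e1 e2])
         (use n1 p1 le i IH in auto)
    then show ?case using n1 by (auto simp: i_def[symmetric])
  qed
  hence "b i j \<le> a i j" if "i \<le> I" "j \<le> J" for i j
    using that by (metis diff_diff_cancel diff_le_self)
  thus ?thesis unfolding a_def b_def by blast
qed

end
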